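(* For every $Q\subset\mathrm{EX}(M)$, the space $Q(M)$ is separable.
   Context: Conventions: $M$ is an $n$-dimensional smooth manifold (Hausdorff, second countable) with maximal $C^\infty$ atlas $\mathcal{A}(M)$; every chart $\alpha$ has open domain $\mathrm{dom}(\alpha)\subset M$ and open range $\mathrm{ran}(\alpha)\subset\mathbb{R}^n$. For $A\subset\mathbb{R}^n$, $\partial A$ is its boundary in $\mathbb{R}^n$; for $A\subset U\subset\mathbb{R}^n$, $\partial_U A$ is the boundary of $A$ relative to $U$. An admissible boundary point of $\alpha$ is a $p\in\partial\,\mathrm{ran}(\alpha)$ such that every sequence $(x_i)\subset\mathrm{dom}(\alpha)$ with $\alpha(x_i)\to p$ has no accumulation point in $M$; $B(\alpha)$ is the set of these. An extension is a pair $(\alpha,U)$, $U\subset\mathbb{R}^n$ open, $\mathrm{ran}(\alpha)\subset U$, $\emptyset\ne\partial_U\mathrm{ran}(\alpha)\subset B(\alpha)$; $\mathrm{EX}(M)$ is the set of extensions. A boundary set is $(\alpha,U,V)$ with $(\alpha,U)\in\mathrm{EX}(M)$, $V\subset B(\alpha)\cap U$ (a boundary point if $V=\{p\}$). $(\alpha,U,V)$ covers $(\beta,X,Y)$ if for every sequence $(y_i)\subset\mathrm{dom}(\beta)$ with $(\beta(y_i))$ having an accumulation point in $Y$ there is a subsequence $(v_i)\subset\mathrm{dom}(\alpha)$ of $(y_i)$ with $(\alpha(v_i))$ having an accumulation point in $V$; they are equivalent, $\equiv$, if each covers the other. Completion: for $Q\subset\mathrm{EX}(M)$ let $P=\{(\alpha,\mathrm{ran}(\alpha)):\alpha\in\mathcal{A}(M)\}$,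 $S_Q=P\cup Q$, $N_{(\alpha,U)}=\mathrm{ran}(\alpha)\cup\partial_U\mathrm{ran}(\alpha)$ with subspace topology of $\mathbb{R}^n$, $N_Q=\bigsqcup_{(\alpha,U)\in S_Q}N_{(\alpha,U)}$ with disjoint-union topology. Identify $x\in N_{(\alpha,U)}$ with $y\in N_{(\beta,X)}$ iff either $x\in\mathrm{ran}(\alpha)$, $y\in\mathrm{ran}(\beta)$, $\beta\circ\alpha^{-1}(x)=y$, or $x\in\partial_U\mathrm{ran}(\alpha)$, $y\in\partial_X\mathrm{ran}(\beta)$, $(\alpha,U,\{x\})\equiv(\beta,X,\{y\})$. $Q(M)$ is the quotient space with the quotient topology and $q:N_Q\to Q(M)$ the quotient map. *)

theory Defs
  imports "HOL-Analysis.Analysis"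
begin

text \<open>The derivative is required to have C^(k-1) directional components, i.e. x maps to f' x v
  is C^(k-1) for each fixed v (equivalently the derivative is C^(k-1) in finite dimensions).\<close>
fun Ck :: "nat \<Rightarrow> 'a::real_normed_vector set \<Rightarrow> ('a \<Rightarrow> 'b::real_normed_vector) \<Rightarrow> bool" where
  "Ck 0 S f = continuous_on S f"
| "Ck (Suc k) S f =
     (\<exists>f'. (\<forall>x\<in>S. (f has_derivative f' x) (at x)) \<and> (\<forall>v. Ck k S (\<lambda>x. f' x v)))"

definition smooth_on :: "'a::real_normed_vector set \<Rightarrow> ('a \<Rightarrow> 'b::real_normed_vector) \<Rightarrow> bool" where
  "smooth_on S f \<longleftrightarrow> (\<forall>k. Ck k S f)"

text \<open>A chart on the topological space T with values in R^n (n = CARD('n)) is a pair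
  (domain, map).\<close>
type_synonym ('a, 'n) chart = "'a set \<times> ('a \<Rightarrow> real^'n)"

definition cdom :: "('a, 'n::finite) chart \<Rightarrow> 'a set" where
  "cdom c = fst c"

definition cran :: "('a, 'n::finite) chart \<Rightarrow> (real^'n) set" where
  "cran c = snd c ` fst c"

definition cinv :: "('a, 'n::finite) chart \<Rightarrow> real^'n \<Rightarrow> 'a" where
  "cinv c = inv_into (fst c) (snd c)"

definition is_chart :: "'a topology \<Rightarrow> ('a, 'n::finite) chart \<Rightarrow> bool" where
  "is_chart T c \<longleftrightarrow> openin T (cdom c) \<and> open (cran c) \<and>
     homeomorphic_map (subtopology T (cdom c)) (subtopology euclidean (cran c)) (snd c)"

definition smooth_compat :: "('a, 'n::finite) chart \<Rightarrow> ('a, 'n) chart \<Rightarrow> bool" where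
  "smooth_compat c d \<longleftrightarrow>
     smooth_on (snd c ` (cdom c \<inter> cdom d)) (snd d \<circ> cinv c) \<and>
     smooth_on (snd d ` (cdom c \<inter> cdom d)) (snd c \<circ> cinv d)"

definition smooth_atlas :: "'a topology \<Rightarrow> ('a, 'n::finite) chart set \<Rightarrow> bool" where
  "smooth_atlas T Atl \<longleftrightarrow> (\<forall>c\<in>Atl. is_chart T c) \<and> \<Union>(cdom ` Atl) = topspace T \<and>
     (\<forall>c\<in>Atl. \<forall>d\<in>Atl. smooth_compat c d)"

definition smooth_manifold :: "'a topology \<Rightarrow> ('a, 'n::finite) chart set \<Rightarrow> bool" where
  "smooth_manifold T Atl \<longleftrightarrow> Hausdorff_space T \<and> second_countable T \<and> smooth_atlas T Atl"

definition max_atlas :: "'a topology \<Rightarrow> ('a, 'n::finite) chart set \<Rightarrow> ('a, 'n) chart set" where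
  "max_atlas T Atl = {c. is_chart T c \<and> (\<forall>d\<in>Atl. smooth_compat c d)}"

definition seq_acc :: "'a topology \<Rightarrow> (nat \<Rightarrow> 'a) \<Rightarrow> 'a \<Rightarrow> bool" where
  "seq_acc T x p \<longleftrightarrow> p \<in> topspace T \<and>
     (\<forall>U. openin T U \<and> p \<in> U \<longrightarrow> infinite {i. x i \<in> U})"

definition admissible_bd :: "'a topology \<Rightarrow> ('a, 'n::finite) chart \<Rightarrow> real^'n \<Rightarrow> bool" where
  "admissible_bd T c p \<longleftrightarrow> p \<in> frontier (cran c) \<and>
     (\<forall>x. (\<forall>i. x i \<in> cdom c) \<and> ((\<lambda>i. snd c (x i)) \<longlonglongrightarrow> p) \<longrightarrow> \<not> (\<exists>m. seq_acc T x m))"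

definition Bset :: "'a topology \<Rightarrow> ('a, 'n::finite) chart \<Rightarrow> (real^'n) set" where
  "Bset T c = {p. admissible_bd T c p}"

definition rel_bd :: "(real^'n::finite) set \<Rightarrow> (real^'n) set \<Rightarrow> (real^'n) set" where
  "rel_bd U A = (subtopology euclidean U) frontier_of A"

definition EXT :: "'a topology \<Rightarrow> ('a, 'n::finite) chart set \<Rightarrow> (('a, 'n) chart \<times> (real^'n) set) set" where
  "EXT T Atl = {(c, U). c \<in> max_atlas T Atl \<and> open U \<and> cran c \<subseteq> U \<and>
      rel_bd U (cran c) \<noteq> {} \<and> rel_bd U (cran c) \<subseteq> Bset T c}"

definition covers :: "('a, 'n::finite) chart \<times> (real^'n) set \<times> (real^'n) set \<Rightarrow>
    ('a, 'n) chart \<times> (real^'n) set \<times> (real^'n) set \<Rightarrow> bool" where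
  "covers A B \<longleftrightarrow> (case A of (c, U, V) \<Rightarrow> case B of (d, W, Y) \<Rightarrow>
     (\<forall>y. (\<forall>i. y i \<in> cdom d) \<and> (\<exists>p\<in>Y. seq_acc euclidean (\<lambda>i. snd d (y i)) p) \<longrightarrow>
        (\<exists>r. strict_mono r \<and> (\<forall>i. y (r i) \<in> cdom c) \<and>
             (\<exists>q\<in>V. seq_acc euclidean (\<lambda>i. snd c (y (r i))) q))))"

definition bs_equiv :: "('a, 'n::finite) chart \<times> (real^'n) set \<times> (real^'n) set \<Rightarrow>
    ('a, 'n) chart \<times> (real^'n) set \<times> (real^'n) set \<Rightarrow> bool" where
  "bs_equiv A B \<longleftrightarrow> covers A B \<and> covers B A"

definition SQ :: "'a topology \<Rightarrow> ('a, 'n::finite) chart set \<Rightarrow> (('a, 'n) chart \<times> (real^'n) set) set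
    \<Rightarrow> (('a, 'n) chart \<times> (real^'n) set) set" where
  "SQ T Atl Q = {(c, cran c) | c. c \<in> max_atlas T Atl} \<union> Q"

definition Nfib :: "('a, 'n::finite) chart \<times> (real^'n) set \<Rightarrow> (real^'n) set" where
  "Nfib s = (case s of (c, U) \<Rightarrow> cran c \<union> rel_bd U (cran c))"

definition NQ :: "'a topology \<Rightarrow> ('a, 'n::finite) chart set \<Rightarrow> (('a, 'n) chart \<times> (real^'n) set) set
    \<Rightarrow> ((('a, 'n) chart \<times> (real^'n) set) \<times> (real^'n)) topology" where
  "NQ T Atl Q = sum_topology (\<lambda>s. subtopology euclidean (Nfib s)) (SQ T Atl Q)"

definition ident :: "'a topology \<Rightarrow> ('a, 'n::finite) chart set \<Rightarrow> (('a, 'n) chart \<times> (real^'n) set) set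
    \<Rightarrow> (((('a, 'n) chart \<times> (real^'n) set) \<times> (real^'n)) \<times> ((('a, 'n) chart \<times> (real^'n) set) \<times> (real^'n))) set" where
  "ident T Atl Q = {(((c, U), x), ((d, W), y)).
      (c, U) \<in> SQ T Atl Q \<and> (d, W) \<in> SQ T Atl Q \<and> x \<in> Nfib (c, U) \<and> y \<in> Nfib (d, W) \<and>
      ((x \<in> cran c \<and> y \<in> cran d \<and> cinv c x \<in> cdom d \<and> snd d (cinv c x) = y) \<or>
       (x \<in> rel_bd U (cran c) \<and> y \<in> rel_bd W (cran d) \<and> bs_equiv (c, U, {x}) (d, W, {y})))}"

definition quotient_topology :: "'b topology \<Rightarrow> ('b \<times> 'b) set \<Rightarrow> 'b set topology" where
  "quotient_topology X E = topology (\<lambda>U. U \<subseteq> topspace X // E \<and>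
      openin X {x \<in> topspace X. E `` {x} \<in> U})"

lemma istopology_quotient_topology:
  "istopology (\<lambda>U. U \<subseteq> topspace X // E \<and> openin X {x \<in> topspace X. E `` {x} \<in> U})"
proof -
  have 1: "{x \<in> topspace X. E `` {x} \<in> S \<inter> T} =
      {x \<in> topspace X. E `` {x} \<in> S} \<inter> {x \<in> topspace X. E `` {x} \<in> T}" for S T by auto
  have 2: "{x \<in> topspace X. E `` {x} \<in> \<Union>K} = (\<Union>S\<in>K. {x \<in> topspace X. E `` {x} \<in> S})" for K by auto
  show ?thesis unfolding istopology_def 1 2 by auto
qed

definition QM :: "'a topology \<Rightarrow> ('a, 'n::finite) chart set \<Rightarrow> (('a, 'n) chart \<times> (real^'n) set) set
    \<Rightarrow> ((('a, 'n) chart \<times> (real^'n) set) \<times> (real^'n)) set topology" where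
  "QM T Atl Q = quotient_topology (NQ T Atl Q) ((ident T Atl Q \<union> (ident T Atl Q)\<inverse>)\<^sup>*)"

end

theory Submission
  imports Defs
begin

lemma QM_open:
  "openin (quotient_topology X E) W \<longleftrightarrow>
     W \<subseteq> topspace X // E \<and> openin X {x \<in> topspace X. E `` {x} \<in> W}"
  unfolding quotient_topology_def
  by (subst topology_inverse'[OF istopology_quotient_topology]) (rule refl)

lemma QM_topspace: "topspace (quotient_topology X E) = topspace X // E"
proof -
  have "openin (quotient_topology X E) (topspace X // E)"
  proof -
    have "{x \<in> topspace X. E `` {x} \<in> topspace X // E} = topspace X"
      by (auto simp: quotient_def)
    then show ?thesis unfolding QM_open by simp
  qed
  then have "topspace X // E \<subseteq> topspace (quotient_topology X E)"
    by (simp add: openin_subset)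
  moreover have "topspace (quotient_topology X E) \<subseteq> topspace X // E"
    using QM_open[of X E "topspace (quotient_topology X E)"] by simp
  ultimately show ?thesis by blast
qed

lemma class_eq:
  assumes "(a, b) \<in> (R \<union> R\<inverse>)\<^sup>*"
  shows "(R \<union> R\<inverse>)\<^sup>* `` {a} = (R \<union> R\<inverse>)\<^sup>* `` {b}"
proof -
  have s: "sym ((R \<union> R\<inverse>)\<^sup>*)" by (intro sym_rtrancl) (auto simp: sym_def)
  have "(b, a) \<in> (R \<union> R\<inverse>)\<^sup>*" using s assms by (meson symD)
  then show ?thesis using assms by (auto intro: rtrancl_trans)
qed

lemma fiber_meets_ran:
  assumes "openin (subtopology euclidean (Nfib (c, U))) Ob" "p \<in> Ob"
  shows "\<exists>p'. p' \<in> Ob \<and> p' \<in> cran c"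
proof -
  obtain N where N: "open N" "Ob = N \<inter> Nfib (c, U)"
    using assms(1) by (auto simp: openin_subtopology)
  show ?thesis
  proof (cases "p \<in> cran c")
    case True then show ?thesis using assms by blast
  next
    case False
    then have "p \<in> rel_bd U (cran c)" using assms N by (auto simp: Nfib_def)
    then have "p \<in> (subtopology euclidean U) closure_of (cran c)"
      unfolding rel_bd_def frontier_of_def by blast
    moreover have "openin (subtopology euclidean U) (N \<inter> U)"
      using N(1) by (auto simp: openin_subtopology)
    moreover have "p \<in> N \<inter> U"
      using \<open>p \<in> (subtopology euclidean U) closure_of (cran c)\<close> assms N
      by (auto simp: in_closure_of)
    ultimately obtain y where "y \<in> cran c" "y \<in> N \<inter> U"
      unfolding in_closure_of by blast
    then show ?thesis using N by (auto simp: Nfib_def)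
  qed
qed


theorem mainTheorem19:
  fixes T :: "'a topology" and Atl :: "('a, 'n::finite) chart set"
    and Q :: "(('a, 'n) chart \<times> (real^'n) set) set"
  assumes "smooth_manifold T Atl"
    and "Q \<subseteq> EXT T Atl"
  shows "separable_space (QM T Atl Q)"
proof -
  define X where "X = NQ T Atl Q"
  define E where "E = (ident T Atl Q \<union> (ident T Atl Q)\<inverse>)\<^sup>*"
  have QMeq: "QM T Atl Q = quotient_topology X E" by (simp add: QM_def X_def E_def)
  have atl: "smooth_atlas T Atl" "second_countable T"
    using assms(1) by (auto simp: smooth_manifold_def)
  have Atl_max: "Atl \<subseteq> max_atlas T Atl"
    using atl(1) by (auto simp: smooth_atlas_def max_atlas_def)
  have SQ_chart: "is_chart T c" if "(c, U) \<in> SQ T Atl Q" for c U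
  proof -
    have "c \<in> max_atlas T Atl"
      using that assms(2) by (auto simp: SQ_def EXT_def)
    then show ?thesis by (simp add: max_atlas_def)
  qed
  have topX: "topspace X = Sigma (SQ T Atl Q) Nfib"
    by (auto simp: X_def NQ_def)
  obtain C where C: "countable C" "C \<subseteq> topspace T" "T closure_of C = topspace T"
    using second_countable_imp_separable_space[OF atl(2)] unfolding separable_space_def by blast
  have "\<forall>d\<in>topspace T. \<exists>c\<in>Atl. d \<in> cdom c"
    using atl(1) unfolding smooth_atlas_def by blast
  then obtain ch where ch: "\<And>d. d \<in> topspace T \<Longrightarrow> ch d \<in> Atl \<and> d \<in> cdom (ch d)"
    by metis
  define pt where "pt d = ((ch d, cran (ch d)), snd (ch d) d)" for d
  have pt_SQ: "(ch d, cran (ch d)) \<in> SQ T Atl Q" if "d \<in> topspace T" for d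
  proof -
    have "ch d \<in> max_atlas T Atl" using ch[OF that] Atl_max by blast
    then show ?thesis unfolding SQ_def by blast
  qed
  have pt_ran: "snd (ch d) d \<in> cran (ch d)" if "d \<in> topspace T" for d
    using ch[OF that] by (auto simp: cran_def cdom_def)
  have pt_X: "pt d \<in> topspace X" if "d \<in> topspace T" for d
    using pt_SQ[OF that] pt_ran[OF that] by (auto simp: topX pt_def Nfib_def)
  define S where "S = (\<lambda>d. E `` {pt d}) ` C"
  show ?thesis
    unfolding separable_space_def QMeq
  proof (intro exI conjI)
    show "countable S" using C(1) by (simp add: S_def)
    show Ssub: "S \<subseteq> topspace (quotient_topology X E)"
      unfolding QM_topspace S_def using C(2) pt_X by (auto simp: quotient_def)
    show "quotient_topology X E closure_of S = topspace (quotient_topology X E)"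
      unfolding dense_intersects_open
    proof (intro allI impI)
      fix W assume W: "openin (quotient_topology X E) W \<and> W \<noteq> {}"
      then obtain w where "w \<in> W" by blast
      have Wsub: "W \<subseteq> topspace X // E" and
        Pop: "openin X {x \<in> topspace X. E `` {x} \<in> W}"
        using W QM_open by blast+
      obtain z where z: "z \<in> topspace X" "w = E `` {z}"
        using \<open>w \<in> W\<close> Wsub by (auto simp: quotient_def)
      obtain c U p where zc: "z = ((c, U), p)" by (metis prod.collapse)
      have cU: "(c, U) \<in> SQ T Atl Q" "p \<in> Nfib (c, U)" using z zc by (auto simp: topX)
      define Ob where "Ob = {x. ((c, U), x) \<in> {x \<in> topspace X. E `` {x} \<in> W}}"
      have Obop: "openin (subtopology euclidean (Nfib (c, U))) Ob"
        using Pop cU(1) unfolding Ob_def X_def NQ_def openin_sum_topology by auto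
      have "p \<in> Ob" using z zc \<open>w \<in> W\<close> by (auto simp: Ob_def)
      then obtain p' where p': "p' \<in> Ob" "p' \<in> cran c"
        using fiber_meets_ran[OF Obop] by blast
      have chc: "is_chart T c" using SQ_chart[OF cU(1)] .
      have hm: "homeomorphic_map (subtopology T (cdom c)) (subtopology euclidean (cran c)) (snd c)"
        and opd: "openin T (cdom c)"
        using chc by (auto simp: is_chart_def)
      have dsub: "cdom c \<subseteq> topspace T" using opd by (simp add: openin_subset)
      have "openin (subtopology euclidean (cran c)) (Ob \<inter> cran c)"
      proof -
        obtain N where "open N" "Ob = N \<inter> Nfib (c, U)"
          using Obop by (auto simp: openin_subtopology)
        then have "Ob \<inter> cran c = N \<inter> cran c" by (auto simp: Nfib_def)
        then show ?thesis using \<open>open N\<close> by (auto simp: openin_subtopology)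
      qed
      then have "openin (subtopology T (cdom c))
          {m \<in> topspace (subtopology T (cdom c)). snd c m \<in> Ob \<inter> cran c}"
        using homeomorphic_imp_continuous_map[OF hm] unfolding continuous_map by blast
      moreover have "topspace (subtopology T (cdom c)) = cdom c" using dsub by auto
      moreover have "{m \<in> topspace (subtopology T (cdom c)). snd c m \<in> Ob \<inter> cran c}
          = {m \<in> cdom c. snd c m \<in> Ob \<inter> cran c}" using dsub by auto
      ultimately have "openin (subtopology T (cdom c)) {m \<in> cdom c. snd c m \<in> Ob \<inter> cran c}"
        by metis
      then have Vop: "openin T {m \<in> cdom c. snd c m \<in> Ob \<inter> cran c}"
        using opd openin_trans_full by blast
      obtain m0 where "m0 \<in> cdom c" "snd c m0 = p'"
        using p'(2) by (auto simp: cran_def cdom_def)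
      then have "{m \<in> cdom c. snd c m \<in> Ob \<inter> cran c} \<noteq> {}" using p' by blast
      then obtain d where d: "d \<in> C" "d \<in> cdom c" "snd c d \<in> Ob"
        using C(3) Vop unfolding dense_intersects_open by blast
      have dT: "d \<in> topspace T" using d C(2) by blast
      have inW: "E `` {((c, U), snd c d)} \<in> W" using d(3) by (simp add: Ob_def)
      have injc: "inj_on (snd c) (cdom c)"
        using homeomorphic_imp_injective_map[OF hm] dsub
        by (metis inf.absorb_iff2 topspace_subtopology)
      have "cinv c (snd c d) = d"
        using injc d(2) by (simp add: cinv_def cdom_def inv_into_f_f)
      moreover have "snd c d \<in> cran c" using d(2) by (auto simp: cran_def cdom_def)
      ultimately have "(((c, U), snd c d), pt d) \<in> ident T Atl Q"
        using cU(1) pt_SQ[OF dT] pt_ran[OF dT] ch[OF dT]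
        unfolding ident_def pt_def by (auto simp: Nfib_def)
      then have "(((c, U), snd c d), pt d) \<in> E" unfolding E_def by auto
      then have "E `` {pt d} = E `` {((c, U), snd c d)}"
        unfolding E_def by (metis class_eq)
      then have "E `` {pt d} \<in> S \<inter> W" using inW d(1) by (auto simp: S_def)
      then show "S \<inter> W \<noteq> {}" by blast
    qed
  qed
qed

end
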